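(* (i) A diagonal matrix $D=\mathrm{diag}(z_1,z_2,z_3,z_4)\in U(4)$ can be written as $D=D_1\otimes D_2$ with $D_1,D_2$ diagonal elements of $U(2)$ if and only if $z_1z_2^{-1}z_3^{-1}z_4=1$. (ii) Every $4\times 4$ unitary matrix that is diagonal in the computational basis can be implemented, up to a global phase, by a circuit of at most five elementary gates.
   Context: The computational basis of $\mathbb{C}^2\otimes\mathbb{C}^2$ is $|00\rangle,|01\rangle,|10\rangle,|11\rangle$ in this order, and $\otimes$ is the Kronecker product. The elementary gates are the $4\times 4$ matrices of the following forms: $R_y(\theta)\otimes \mathbf{1}$ or $\mathbf{1}\otimes R_y(\theta)$, where $R_y(\theta)=\begin{pmatrix}\cos\theta/2 & \sin\theta/2\\ -\sin\theta/2 & \cos\theta/2\end{pmatrix}$; $R_z(\alpha)\otimes\mathbf{1}$ or $\mathbf{1}\otimes R_z(\alpha)$, where $R_z(\alpha)=\mathrm{diag}(e^{-i\alpha/2},e^{i\alpha/2})$ ($\theta,\alpha$ real); and the two CNOT gates, namely the permutation matrix swapping $|10\rangle\leftrightarrow|11\rangle$ and the permutation matrix swapping $|01\rangle\leftrightarrow|11\rangle$. A circuit computes the product of its gate matrices; implementing $U$ up to global phase means the product equals $cU$ for some $|c|=1$. *)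

theory Defs
  imports Complex_Main "Jordan_Normal_Form.Matrix"
begin

definition adj :: "complex mat \<Rightarrow> complex mat" where
  "adj A = mat (dim_col A) (dim_row A) (\<lambda>(i,j). cnj (A $$ (j,i)))"

definition unitary_mat :: "nat \<Rightarrow> complex mat \<Rightarrow> bool" where
  "unitary_mat n A \<longleftrightarrow> A \<in> carrier_mat n n \<and> A * adj A = 1\<^sub>m n"

definition kron :: "complex mat \<Rightarrow> complex mat \<Rightarrow> complex mat" where
  "kron A B = mat (dim_row A * dim_row B) (dim_col A * dim_col B)
     (\<lambda>(i,j). A $$ (i div dim_row B, j div dim_col B) * B $$ (i mod dim_row B, j mod dim_col B))"

definition diag_of :: "nat \<Rightarrow> (nat \<Rightarrow> complex) \<Rightarrow> complex mat" where
  "diag_of n z = mat n n (\<lambda>(i,j). if i = j then z i else 0)"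

definition Ry :: "real \<Rightarrow> complex mat" where
  "Ry \<theta> = mat_of_rows_list 2
     [[complex_of_real (cos (\<theta>/2)), complex_of_real (sin (\<theta>/2))],
      [complex_of_real (- sin (\<theta>/2)), complex_of_real (cos (\<theta>/2))]]"

definition Rz :: "real \<Rightarrow> complex mat" where
  "Rz \<alpha> = diag_of 2 (\<lambda>i. if i = 0 then cis (- \<alpha>/2) else cis (\<alpha>/2))"

(* basis order |00>,|01>,|10>,|11> = indices 0,1,2,3 *)
definition perm4 :: "(nat \<Rightarrow> nat) \<Rightarrow> complex mat" where
  "perm4 p = mat 4 4 (\<lambda>(i,j). if i = p j then 1 else 0)"

definition CNOT1 :: "complex mat" where   (* swaps |10> <-> |11> *)
  "CNOT1 = perm4 (Transposition.transpose 2 3)"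

definition CNOT2 :: "complex mat" where   (* swaps |01> <-> |11> *)
  "CNOT2 = perm4 (Transposition.transpose 1 3)"

definition elementary_gates :: "complex mat set" where
  "elementary_gates =
     {kron (Ry \<theta>) (1\<^sub>m 2) | \<theta>. True} \<union> {kron (1\<^sub>m 2) (Ry \<theta>) | \<theta>. True} \<union>
     {kron (Rz \<alpha>) (1\<^sub>m 2) | \<alpha>. True} \<union> {kron (1\<^sub>m 2) (Rz \<alpha>) | \<alpha>. True} \<union>
     {CNOT1, CNOT2}"

definition circuit_mat :: "complex mat list \<Rightarrow> complex mat" where
  "circuit_mat gs = foldr (\<lambda>g M. g * M) gs (1\<^sub>m 4)"

definition implements_up_to_phase :: "complex mat list \<Rightarrow> complex mat \<Rightarrow> bool" where
  "implements_up_to_phase gs U \<longleftrightarrow> (\<exists>c. cmod c = 1 \<and> circuit_mat gs = c \<cdot>\<^sub>m U)"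

end

theory Submission imports Defs begin

lemma less4: "(i::nat) < 4 \<longleftrightarrow> i = 0 \<or> i = 1 \<or> i = 2 \<or> i = 3" by auto
lemma less2: "(i::nat) < 2 \<longleftrightarrow> i = 0 \<or> i = 1" by auto

lemma dims_diag[simp]: "dim_row (diag_of n f) = n" "dim_col (diag_of n f) = n"
  "diag_of n f \<in> carrier_mat n n"
  by (auto simp: diag_of_def)

lemma idx_diag[simp]: "i < n \<Longrightarrow> j < n \<Longrightarrow> diag_of n f $$ (i,j) = (if i = j then f i else 0)"
  by (simp add: diag_of_def)

lemma diag_mult: "diag_of n f * diag_of n g = diag_of n (\<lambda>i. f i * g i)"
proof (rule eq_matI)
  fix i j assume ij: "i < dim_row (diag_of n (\<lambda>i. f i * g i))" "j < dim_col (diag_of n (\<lambda>i. f i * g i))"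
  hence "i < n" "j < n" by auto
  have "(diag_of n f * diag_of n g) $$ (i,j) = (\<Sum>k\<in>{0..<n}. (if i = k then f i else 0) * (if k = j then g k else 0))"
    using \<open>i<n\<close> \<open>j<n\<close> by (simp add: scalar_prod_def)
  also have "\<dots> = (\<Sum>k\<in>{0..<n}. if k = i then (if i = j then f i * g i else 0) else 0)"
    by (rule sum.cong) auto
  also have "\<dots> = (if i = j then f i * g i else 0)" using \<open>i<n\<close> by simp
  finally show "(diag_of n f * diag_of n g) $$ (i,j) = diag_of n (\<lambda>i. f i * g i) $$ (i,j)"
    using \<open>i<n\<close> \<open>j<n\<close> by simp
qed auto

lemma mult4: "A \<in> carrier_mat 4 4 \<Longrightarrow> B \<in> carrier_mat 4 4 \<Longrightarrow> i < 4 \<Longrightarrow> j < 4 \<Longrightarrow>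
  (A*B)$$(i,j) = A$$(i,0)*B$$(0,j)+A$$(i,1)*B$$(1,j)+A$$(i,2)*B$$(2,j)+A$$(i,3)*B$$(3,j)"
proof -
  assume a: "A \<in> carrier_mat 4 4" "B \<in> carrier_mat 4 4" "i < 4" "j < 4"
  have s: "{0..<4::nat} = {0,1,2,3}" by auto
  show ?thesis using a by (simp add: scalar_prod_def s add.assoc)
qed

lemma unit_diag:
  assumes "unitary_mat n U" "diagonal_mat U" "i < n"
  shows "cmod (U$$(i,i)) = 1"
proof -
  have U: "U \<in> carrier_mat n n" and e: "U * adj U = 1\<^sub>m n" using assms(1) by (auto simp: unitary_mat_def)
  have "1 = (U * adj U) $$ (i,i)" using e assms(3) by simp
  also have "\<dots> = (\<Sum>k\<in>{0..<n}. U$$(i,k) * cnj (U$$(i,k)))"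
    using U assms(3) by (simp add: scalar_prod_def adj_def)
  also have "\<dots> = (\<Sum>k\<in>{0..<n}. if k = i then U$$(i,i) * cnj (U$$(i,i)) else 0)"
    apply (rule sum.cong) using assms(2) U assms(3) by (auto simp: diagonal_mat_def)
  also have "\<dots> = U$$(i,i) * cnj (U$$(i,i))" using assms(3) by simp
  also have "\<dots> = complex_of_real ((cmod (U$$(i,i)))^2)" by (metis complex_norm_square)
  finally have "(cmod (U$$(i,i)))^2 = 1" by (metis of_real_eq_1_iff)
  moreover have "cmod (U$$(i,i)) \<ge> 0" by simp
  ultimately show ?thesis by (simp add: power2_eq_1_iff)
qed

lemma unitary_diag:
  assumes "\<And>i. i < n \<Longrightarrow> cmod (f i) = 1"
  shows "unitary_mat n (diag_of n f)"
proof -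
  have "adj (diag_of n f) = diag_of n (\<lambda>i. cnj (f i))"
    by (rule eq_matI) (auto simp: adj_def)
  moreover have "diag_of n (\<lambda>i. f i * cnj (f i)) = 1\<^sub>m n"
    by (rule eq_matI) (auto simp: complex_norm_square[symmetric] assms)
  ultimately show ?thesis by (simp add: unitary_mat_def diag_mult)
qed

lemma diagonal_diag: "diagonal_mat (diag_of n f)"
  by (simp add: diagonal_mat_def)

lemma Rz_dims[simp]: "dim_row (Rz a) = 2" "dim_col (Rz a) = 2" by (auto simp: Rz_def)

lemma kron_Rz1: "kron (Rz a) (1\<^sub>m 2) = diag_of 4 (\<lambda>i. if i < 2 then cis (-a/2) else cis (a/2))"
  apply (rule eq_matI)
  apply (auto simp: kron_def Rz_def less4)
  done

lemma kron_1Rz: "kron (1\<^sub>m 2) (Rz a) = diag_of 4 (\<lambda>i. if even i then cis (-a/2) else cis (a/2))"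
  apply (rule eq_matI)
  apply (auto simp: kron_def Rz_def less4)
  done

lemma CNOT1_carrier[simp]: "CNOT1 \<in> carrier_mat 4 4"
  by (simp add: CNOT1_def perm4_def)

lemma CNOT1_idx: "i < 4 \<Longrightarrow> j < 4 \<Longrightarrow> CNOT1 $$ (i,j) = (if i = Transposition.transpose 2 3 j then 1 else 0)"
  by (simp add: CNOT1_def perm4_def)

lemma CNOT1_dims[simp]: "dim_row CNOT1 = 4" "dim_col CNOT1 = 4" by (auto simp: CNOT1_def perm4_def)

lemma mult44: "A \<in> carrier_mat 4 4 \<Longrightarrow> B \<in> carrier_mat 4 4 \<Longrightarrow> A * B \<in> carrier_mat 4 4"
  by (rule mult_carrier_mat)

lemma CNOT1_sandwich: "CNOT1 * (diag_of 4 f * CNOT1) = diag_of 4 (\<lambda>i. f (Transposition.transpose 2 3 i))"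
proof (rule eq_matI)
  fix i j assume "i < dim_row (diag_of 4 (\<lambda>i. f (Transposition.transpose 2 3 i)))"
    "j < dim_col (diag_of 4 (\<lambda>i. f (Transposition.transpose 2 3 i)))"
  hence "i < 4" "j < 4" by auto
  thus "(CNOT1 * (diag_of 4 f * CNOT1)) $$ (i, j) = diag_of 4 (\<lambda>i. f (Transposition.transpose 2 3 i)) $$ (i, j)"
    unfolding less4
    by (elim disjE; simp add: mult4 mult44 CNOT1_idx Transposition.transpose_def del: index_mult_mat(1))
qed auto

lemma unit_cis: "cmod z = 1 \<Longrightarrow> cis (Arg z) = z"
  using rcis_cmod_Arg[of z] by (simp add: rcis_def)

lemma part1:
  assumes U: "unitary_mat 4 (diag_of 4 (\<lambda>i. [z1, z2, z3, z4] ! i))"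
  shows "(\<exists>D1 D2. unitary_mat 2 D1 \<and> diagonal_mat D1 \<and>
                      unitary_mat 2 D2 \<and> diagonal_mat D2 \<and>
                      diag_of 4 (\<lambda>i. [z1, z2, z3, z4] ! i) = kron D1 D2)
             \<longleftrightarrow> z1 * inverse z2 * inverse z3 * z4 = 1"
proof -
  let ?Z = "diag_of 4 (\<lambda>i. [z1, z2, z3, z4] ! i)"
  have n: "cmod (?Z $$ (i,i)) = 1" if "i < 4" for i
    using unit_diag[OF U diagonal_diag that] .
  have n1: "cmod z1 = 1" using n[of 0] by simp
  have n2: "cmod z2 = 1" using n[of 1] by simp
  have n3: "cmod z3 = 1" using n[of 2] by simp
  have n4: "cmod z4 = 1" using n[of 3] by simp
  have nz: "z1 \<noteq> 0" "z2 \<noteq> 0" "z3 \<noteq> 0" "z4 \<noteq> 0" using n1 n2 n3 n4 by auto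
  show ?thesis
  proof
    assume "\<exists>D1 D2. unitary_mat 2 D1 \<and> diagonal_mat D1 \<and>
                      unitary_mat 2 D2 \<and> diagonal_mat D2 \<and> ?Z = kron D1 D2"
    then obtain D1 D2 where D: "unitary_mat 2 D1" "unitary_mat 2 D2" "?Z = kron D1 D2" by blast
    have c: "D1 \<in> carrier_mat 2 2" "D2 \<in> carrier_mat 2 2" using D by (auto simp: unitary_mat_def)
    have e: "?Z $$ (i,i) = kron D1 D2 $$ (i,i)" for i using D(3) by simp
    have "z1 = D1$$(0,0) * D2$$(0,0)" using e[of 0] c by (simp add: kron_def)
    moreover have "z2 = D1$$(0,0) * D2$$(1,1)" using e[of 1] c by (simp add: kron_def)
    moreover have "z3 = D1$$(1,1) * D2$$(0,0)" using e[of 2] c by (simp add: kron_def)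
    moreover have "z4 = D1$$(1,1) * D2$$(1,1)" using e[of 3] c by (simp add: kron_def)
    ultimately show "z1 * inverse z2 * inverse z3 * z4 = 1" using nz
      by (simp add: field_simps)
  next
    assume h: "z1 * inverse z2 * inverse z3 * z4 = 1"
    have z4: "z4 = z3 / z1 * z2" using h nz by (simp add: field_simps)
    define D1 where "D1 = diag_of 2 (\<lambda>i. if i = 0 then 1 else z3 / z1)"
    define D2 where "D2 = diag_of 2 (\<lambda>i. if i = 0 then z1 else z2)"
    have "unitary_mat 2 D1" unfolding D1_def
      by (rule unitary_diag) (simp add: n1 n3 norm_divide)
    moreover have "unitary_mat 2 D2" unfolding D2_def
      by (rule unitary_diag) (simp add: n1 n2)
    moreover have "?Z = kron D1 D2"
      apply (rule eq_matI)
      apply (auto simp: kron_def D1_def D2_def less4 z4 nz)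
      done
    ultimately show "\<exists>D1 D2. unitary_mat 2 D1 \<and> diagonal_mat D1 \<and>
                      unitary_mat 2 D2 \<and> diagonal_mat D2 \<and> ?Z = kron D1 D2"
      unfolding D1_def D2_def using diagonal_diag by blast
  qed
qed

lemma part2:
  assumes U: "unitary_mat 4 U" and dU: "diagonal_mat U"
  shows "\<exists>gs. length gs \<le> 5 \<and> set gs \<subseteq> elementary_gates \<and> implements_up_to_phase gs U"
proof -
  define u where "u k = U $$ (k,k)" for k
  define p where "p k = Arg (u k)" for k
  have Uc: "U \<in> carrier_mat 4 4" using U by (simp add: unitary_mat_def)
  have uc: "u k = cis (p k)" if "k < 4" for k
    unfolding p_def u_def using unit_cis[OF unit_diag[OF U dU that]] by simp
  have Ud: "U = diag_of 4 u"
    apply (rule eq_matI) using Uc dU by (auto simp: u_def diagonal_mat_def)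
  define a where "a = (p 2 + p 3 - p 0 - p 1) / 2"
  define b where "b = (p 1 + p 3 - p 0 - p 2) / 2"
  define c where "c = (p 1 + p 2 - p 0 - p 3) / 2"
  define g where "g = (p 0 + p 1 + p 2 + p 3) / 4"
  define gs where "gs = [kron (Rz a) (1\<^sub>m 2), kron (1\<^sub>m 2) (Rz b), CNOT1, kron (1\<^sub>m 2) (Rz c), CNOT1]"
  have "set gs \<subseteq> elementary_gates" unfolding gs_def elementary_gates_def by auto
  moreover have "length gs \<le> 5" unfolding gs_def by simp
  moreover have "circuit_mat gs = cis (- g) \<cdot>\<^sub>m U"
  proof -
    have "circuit_mat gs = kron (Rz a) (1\<^sub>m 2) * (kron (1\<^sub>m 2) (Rz b) * (CNOT1 * (kron (1\<^sub>m 2) (Rz c) * CNOT1)))"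
      unfolding gs_def circuit_mat_def using right_mult_one_mat[OF CNOT1_carrier] by simp
    also have "\<dots> = diag_of 4 (\<lambda>i. (if i < 2 then cis (-a/2) else cis (a/2)) * ((if even i then cis (-b/2) else cis (b/2)) *
         (if even (Transposition.transpose 2 3 i) then cis (-c/2) else cis (c/2))))"
      unfolding kron_1Rz CNOT1_sandwich kron_Rz1 diag_mult ..
    also have "\<dots> = cis (- g) \<cdot>\<^sub>m U"
    proof (rule eq_matI)
      fix i j assume "i < dim_row (cis (- g) \<cdot>\<^sub>m U)" "j < dim_col (cis (- g) \<cdot>\<^sub>m U)"
      hence ij: "i < 4" "j < 4" using Uc by auto
      have e0: "cis (- (a/2)) * (cis (- (b/2)) * cis (- (c/2))) = cis (-g) * cis (p 0)"
        unfolding cis_mult by (rule arg_cong[where f=cis]) (simp add: a_def b_def c_def g_def field_simps)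
      have e1: "cis (- (a/2)) * (cis (b/2) * cis (c/2)) = cis (-g) * cis (p (Suc 0))"
        unfolding cis_mult by (rule arg_cong[where f=cis]) (simp add: a_def b_def c_def g_def field_simps)
      have e2: "cis (a/2) * (cis (- (b/2)) * cis (c/2)) = cis (-g) * cis (p 2)"
        unfolding cis_mult by (rule arg_cong[where f=cis]) (simp add: a_def b_def c_def g_def field_simps)
      have e3: "cis (a/2) * (cis (b/2) * cis (- (c/2))) = cis (-g) * cis (p 3)"
        unfolding cis_mult by (rule arg_cong[where f=cis]) (simp add: a_def b_def c_def g_def field_simps)
      show "diag_of 4 (\<lambda>i. (if i < 2 then cis (-a/2) else cis (a/2)) * ((if even i then cis (-b/2) else cis (b/2)) *
         (if even (Transposition.transpose 2 3 i) then cis (-c/2) else cis (c/2)))) $$ (i,j) = (cis (- g) \<cdot>\<^sub>m U) $$ (i,j)"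
        using ij unfolding less4 Ud
        by (elim disjE; simp add: uc e0 e1 e2 e3 Transposition.transpose_def)
    qed (use Uc in auto)
    finally show ?thesis .
  qed
  ultimately show ?thesis unfolding implements_up_to_phase_def
    by (intro exI[of _ gs]) (auto intro!: exI[of _ "cis (- g)"])
qed

theorem proposition1:
  shows "(\<forall>z1 z2 z3 z4.
            unitary_mat 4 (diag_of 4 (\<lambda>i. [z1, z2, z3, z4] ! i)) \<longrightarrow>
            ((\<exists>D1 D2. unitary_mat 2 D1 \<and> diagonal_mat D1 \<and>
                      unitary_mat 2 D2 \<and> diagonal_mat D2 \<and>
                      diag_of 4 (\<lambda>i. [z1, z2, z3, z4] ! i) = kron D1 D2)
             \<longleftrightarrow> z1 * inverse z2 * inverse z3 * z4 = 1))
       \<and> (\<forall>U. unitary_mat 4 U \<and> diagonal_mat U \<longrightarrow>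
            (\<exists>gs. length gs \<le> 5 \<and> set gs \<subseteq> elementary_gates \<and>
                  implements_up_to_phase gs U))"
  using part1 part2 by blast

end
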